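(* Let $\mathcal H=(M,n,\mathcal R)$ be a BMS. Then for every vector $v\in\mathbb R^n$ there is a mode $m\in M$ with $v\cdot r\ge 0$ for all $r\in\mathcal R(m)$ if and only if $\mathcal H$ is safe.
   Context: A multi-mode system is a tuple $\mathcal H=(M,n,\mathcal R)$ with $M$ a finite nonempty set of modes, $n\ge1$ variables, and $\mathcal R:M\to 2^{\mathbb R^n}$ giving nonempty rate sets; it is a BMS if each $\mathcal R(m)$ is a bounded convex polytope, and a CMS (constant-rate) if each $\mathcal R(m)$ is a singleton. An instance of a multi-mode system $(M,n,\mathcal R)$ is a CMS $(M,n,R)$ with $R(m)\in\mathcal R(m)$ for every $m$ (writing $R(m)$ for the single rate). A CMS $(M,n,R)$ is safe if there are $t_m\ge0$ ($m\in M$) with $\sum_{m\in M}t_m=1$ and $\sum_{m\in M}t_m R(m)=\vec 0$. The extreme-rate system $\mathrm{Ext}(\mathcal H)$ of a BMS $\mathcal H=(M,n,\mathcal R)$ is $(M,n,\mathcal R')$ with $\mathcal R'(m)$ the (finite) set of vertices of $\mathcal R(m)$. A BMS $\mathcal H$ is safe if every instance of $\mathrm{Ext}(\mathcal H)$ is safe. *)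

theory Defs
  imports "HOL-Analysis.Analysis"
begin

text \<open>Modes are a finite nonempty set M of elements of type 'm; rates live in real^'n
  (n = CARD('n) \<ge> 1). A rate assignment is a function on modes (only values on M matter).\<close>

definition BMS :: "'m set \<Rightarrow> ('m \<Rightarrow> (real^'n) set) \<Rightarrow> bool" where
  "BMS M \<R> \<longleftrightarrow> finite M \<and> M \<noteq> {} \<and> (\<forall>m\<in>M. \<R> m \<noteq> {} \<and> polytope (\<R> m))"

definition cms_safe :: "'m set \<Rightarrow> ('m \<Rightarrow> real^'n) \<Rightarrow> bool" where
  "cms_safe M R \<longleftrightarrow> (\<exists>t :: 'm \<Rightarrow> real. (\<forall>m\<in>M. t m \<ge> 0) \<and> (\<Sum>m\<in>M. t m) = 1
       \<and> (\<Sum>m\<in>M. t m *\<^sub>R R m) = 0)"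

definition Ext :: "('m \<Rightarrow> (real^'n) set) \<Rightarrow> 'm \<Rightarrow> (real^'n) set" where
  "Ext \<R> m = {x. x extreme_point_of (\<R> m)}"

definition is_instance :: "'m set \<Rightarrow> ('m \<Rightarrow> (real^'n) set) \<Rightarrow> ('m \<Rightarrow> real^'n) \<Rightarrow> bool" where
  "is_instance M \<R> R \<longleftrightarrow> (\<forall>m\<in>M. R m \<in> \<R> m)"

definition bms_safe :: "'m set \<Rightarrow> ('m \<Rightarrow> (real^'n) set) \<Rightarrow> bool" where
  "bms_safe M \<R> \<longleftrightarrow> (\<forall>R. is_instance M (Ext \<R>) R \<longrightarrow> cms_safe M R)"

end

theory Submission
  imports Defs
begin

lemma hull_to_safe:
  fixes R :: "'m \<Rightarrow> real^'n"
  assumes fin: "finite M" and z: "0 \<in> convex hull (R ` M)"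
  shows "cms_safe M R"
proof -
  from z obtain u where u0: "\<forall>x\<in>R`M. 0 \<le> u x" and u1: "sum u (R`M) = 1"
    and u2: "(\<Sum>x\<in>R`M. u x *\<^sub>R x) = 0"
    using convex_hull_finite[of "R`M"] fin by auto
  define c where "c y = real (card {m\<in>M. R m = y})" for y
  define t where "t m = u (R m) / c (R m)" for m
  have cpos: "c y > 0" if "y \<in> R`M" for y
  proof -
    from that obtain m where "m \<in> M" "R m = y" by auto
    then have "{m\<in>M. R m = y} \<noteq> {}" by auto
    moreover have "finite {m\<in>M. R m = y}" using fin by auto
    ultimately show ?thesis unfolding c_def by (simp add: card_gt_0_iff)
  qed
  have inner1: "(\<Sum>m\<in>{x\<in>M. R x = y}. t m) = u y" if "y \<in> R`M" for y
  proof -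
    have "(\<Sum>m\<in>{x\<in>M. R x = y}. t m) = (\<Sum>m\<in>{x\<in>M. R x = y}. u y / c y)"
      by (rule sum.cong) (auto simp: t_def)
    also have "\<dots> = c y * (u y / c y)" by (simp add: c_def)
    also have "\<dots> = u y" using cpos[OF that] by simp
    finally show ?thesis .
  qed
  have inner2: "(\<Sum>m\<in>{x\<in>M. R x = y}. t m *\<^sub>R R m) = u y *\<^sub>R y" if "y \<in> R`M" for y
  proof -
    have "(\<Sum>m\<in>{x\<in>M. R x = y}. t m *\<^sub>R R m) = (\<Sum>m\<in>{x\<in>M. R x = y}. t m) *\<^sub>R y"
      by (simp add: scaleR_sum_left)
    then show ?thesis using inner1[OF that] by simp
  qed
  have "(\<Sum>m\<in>M. t m) = (\<Sum>y\<in>R`M. \<Sum>m\<in>{x\<in>M. R x = y}. t m)"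
    using sum.image_gen[OF fin, of t R] by simp
  also have "\<dots> = 1" using inner1 u1 by simp
  finally have s1: "(\<Sum>m\<in>M. t m) = 1" .
  have "(\<Sum>m\<in>M. t m *\<^sub>R R m) = (\<Sum>y\<in>R`M. \<Sum>m\<in>{x\<in>M. R x = y}. t m *\<^sub>R R m)"
    using sum.image_gen[OF fin, of "\<lambda>m. t m *\<^sub>R R m" R] by simp
  also have "\<dots> = 0" using inner2 u2 by simp
  finally have s2: "(\<Sum>m\<in>M. t m *\<^sub>R R m) = 0" .
  have t0: "\<forall>m\<in>M. t m \<ge> 0"
    using u0 cpos unfolding t_def by (auto intro!: divide_nonneg_pos)
  show ?thesis unfolding cms_safe_def using s1 s2 t0 by blast
qed

theorem lemma2:
  fixes M :: "'m set" and \<R> :: "'m \<Rightarrow> (real^'n) set"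
  assumes "BMS M \<R>"
  shows "(\<forall>v :: real^'n. \<exists>m\<in>M. \<forall>r\<in>\<R> m. v \<bullet> r \<ge> 0) \<longleftrightarrow> bms_safe M \<R>"
proof
  have fin: "finite M" and poly: "\<And>m. m \<in> M \<Longrightarrow> polytope (\<R> m)"
    using assms unfolding BMS_def by auto
  assume H: "\<forall>v :: real^'n. \<exists>m\<in>M. \<forall>r\<in>\<R> m. v \<bullet> r \<ge> 0"
  show "bms_safe M \<R>" unfolding bms_safe_def
  proof (intro allI impI)
    fix R assume I: "is_instance M (Ext \<R>) R"
    then have RinR: "\<And>m. m \<in> M \<Longrightarrow> R m \<in> \<R> m"
      unfolding is_instance_def Ext_def extreme_point_of_def by auto
    show "cms_safe M R"
    proof (cases "0 \<in> convex hull (R ` M)")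
      case True then show ?thesis using hull_to_safe fin by blast
    next
      case False
      have "compact (convex hull (R ` M))" using fin by (simp add: finite_imp_compact_convex_hull)
      then have "closed (convex hull (R ` M))" by (rule compact_imp_closed)
      then obtain a b where ab: "0 < b" "\<forall>x\<in>convex hull (R ` M). inner a x > b"
        using separating_hyperplane_closed_0[OF convex_convex_hull _ False] by blast
      from H obtain m where m: "m \<in> M" "\<forall>r\<in>\<R> m. (-a) \<bullet> r \<ge> 0" by blast
      have "R m \<in> convex hull (R ` M)" using m(1) by (simp add: hull_inc)
      then have "a \<bullet> R m > 0" using ab by force
      moreover have "(-a) \<bullet> R m \<ge> 0" using m RinR by blast
      ultimately show ?thesis by simp
    qed
  qed
next
  have fin: "finite M" and poly: "\<And>m. m \<in> M \<Longrightarrow> polytope (\<R> m)"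
    using assms unfolding BMS_def by auto
  assume S: "bms_safe M \<R>"
  show "\<forall>v :: real^'n. \<exists>m\<in>M. \<forall>r\<in>\<R> m. v \<bullet> r \<ge> 0"
  proof (rule ccontr)
    assume "\<not> ?thesis"
    then obtain v :: "real^'n" where nv: "\<forall>m\<in>M. \<exists>r\<in>\<R> m. v \<bullet> r < 0"
      by (auto simp: not_le)
    have ex: "\<exists>x. x extreme_point_of \<R> m \<and> v \<bullet> x < 0" if "m \<in> M" for m
    proof (rule ccontr)
      assume "\<not> ?thesis"
      then have sub: "{x. x extreme_point_of \<R> m} \<subseteq> {x. v \<bullet> x \<ge> 0}" by (auto simp: not_less)
      have cv: "convex {x::real^'n. v \<bullet> x \<ge> 0}" by (rule convex_halfspace_ge)
      have "\<R> m = convex hull {x. x extreme_point_of \<R> m}"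
        using poly[OF that] by (simp add: Krein_Milman_Minkowski polytope_imp_compact polytope_imp_convex)
      also have "\<dots> \<subseteq> {x. v \<bullet> x \<ge> 0}" using sub cv by (simp add: hull_minimal)
      finally show False using nv that by force
    qed
    define R where "R m = (SOME x. x extreme_point_of \<R> m \<and> v \<bullet> x < 0)" for m
    have R: "R m extreme_point_of \<R> m \<and> v \<bullet> R m < 0" if "m \<in> M" for m
      unfolding R_def using someI_ex[OF ex[OF that]] .
    have "is_instance M (Ext \<R>) R" unfolding is_instance_def Ext_def using R by auto
    then have "cms_safe M R" using S unfolding bms_safe_def by blast
    then obtain t where t0: "\<forall>m\<in>M. t m \<ge> 0" and t1: "(\<Sum>m\<in>M. t m) = 1"
      and t2: "(\<Sum>m\<in>M. t m *\<^sub>R R m) = 0" unfolding cms_safe_def by blast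
    have "0 = v \<bullet> (\<Sum>m\<in>M. t m *\<^sub>R R m)" using t2 by simp
    also have "\<dots> = (\<Sum>m\<in>M. t m * (v \<bullet> R m))" by (simp add: inner_sum_right)
    also have "\<dots> < 0"
    proof -
      have "\<exists>m0\<in>M. t m0 \<noteq> 0"
      proof (rule ccontr)
        assume "\<not> (\<exists>m0\<in>M. t m0 \<noteq> 0)"
        then have "sum t M = 0" by simp
        with t1 show False by simp
      qed
      then obtain m0 where m0: "m0 \<in> M" "t m0 > 0"
        using t0 by (auto simp: less_le)
      have "(\<Sum>m\<in>M. t m * (v \<bullet> R m)) < (\<Sum>m\<in>M. 0)"
      proof (rule sum_strict_mono_ex1[OF fin])
        show "\<forall>m\<in>M. t m * (v \<bullet> R m) \<le> 0"
          using t0 R by (simp add: mult_nonneg_nonpos less_imp_le)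
        show "\<exists>m\<in>M. t m * (v \<bullet> R m) < 0"
          using m0 R by (intro bexI[of _ m0]) (simp_all add: mult_pos_neg)
      qed
      then show ?thesis by simp
    qed
    finally show False by simp
  qed
qed

end
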